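(* Let $G$ be a connected split graph with no universal vertex. Then the cutset hypergraph of $G$ equals the neighborhood hypergraph of $G$; that is, a set $S\subseteq V(G)$ is a minimal cutset of $G$ if and only if $S$ is an inclusion-wise minimal member of the family $\{N(v):v\in V(G)\}$.
   Context: A graph is split if its vertex set can be partitioned into a clique and an independent set. A universal vertex is a vertex adjacent to all other vertices. $N(v)$ denotes the (open) neighborhood of $v$. A cutset of $G$ is a set $S\subseteq V(G)$ such that $G-S$ is disconnected; it is minimal if it contains no other cutset. The cutset hypergraph of $G$ has vertex set $V(G)$ and hyperedges the minimal cutsets; the neighborhood hypergraph of $G$ has vertex set $V(G)$ and hyperedges the inclusion-wise minimal sets in $\{N(v):v\in V(G)\}$. *)

theory Defs
  imports Main
begin

definition simple_graph :: "'a set \<Rightarrow> ('a \<Rightarrow> 'a \<Rightarrow> bool) \<Rightarrow> bool" where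
  "simple_graph V E \<longleftrightarrow> finite V \<and> (\<forall>u v. E u v \<longrightarrow> u \<in> V \<and> v \<in> V) \<and>
     (\<forall>u v. E u v \<longrightarrow> E v u) \<and> (\<forall>v. \<not> E v v)"

definition nbhd :: "'a set \<Rightarrow> ('a \<Rightarrow> 'a \<Rightarrow> bool) \<Rightarrow> 'a \<Rightarrow> 'a set" where
  "nbhd V E v = {u \<in> V. E v u}"

definition reach_in :: "('a \<Rightarrow> 'a \<Rightarrow> bool) \<Rightarrow> 'a set \<Rightarrow> 'a \<Rightarrow> 'a \<Rightarrow> bool" where
  "reach_in E W u w \<longleftrightarrow> (\<exists>p. p \<noteq> [] \<and> hd p = u \<and> last p = w \<and> set p \<subseteq> W \<and>
      (\<forall>i < length p - 1. E (p ! i) (p ! Suc i)))"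

definition connected_graph :: "'a set \<Rightarrow> ('a \<Rightarrow> 'a \<Rightarrow> bool) \<Rightarrow> bool" where
  "connected_graph V E \<longleftrightarrow> V \<noteq> {} \<and> (\<forall>u\<in>V. \<forall>w\<in>V. reach_in E V u w)"

definition disconnected_graph :: "'a set \<Rightarrow> ('a \<Rightarrow> 'a \<Rightarrow> bool) \<Rightarrow> bool" where
  "disconnected_graph V E \<longleftrightarrow> (\<exists>u\<in>V. \<exists>w\<in>V. \<not> reach_in E V u w)"

definition split_graph :: "'a set \<Rightarrow> ('a \<Rightarrow> 'a \<Rightarrow> bool) \<Rightarrow> bool" where
  "split_graph V E \<longleftrightarrow> (\<exists>K I. K \<union> I = V \<and> K \<inter> I = {} \<and>
      (\<forall>u\<in>K. \<forall>v\<in>K. u \<noteq> v \<longrightarrow> E u v) \<and> (\<forall>u\<in>I. \<forall>v\<in>I. \<not> E u v))"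

definition universal_vertex :: "'a set \<Rightarrow> ('a \<Rightarrow> 'a \<Rightarrow> bool) \<Rightarrow> 'a \<Rightarrow> bool" where
  "universal_vertex V E v \<longleftrightarrow> v \<in> V \<and> (\<forall>u\<in>V. u \<noteq> v \<longrightarrow> E v u)"

definition cutset :: "'a set \<Rightarrow> ('a \<Rightarrow> 'a \<Rightarrow> bool) \<Rightarrow> 'a set \<Rightarrow> bool" where
  "cutset V E S \<longleftrightarrow> S \<subseteq> V \<and> disconnected_graph (V - S) E"

definition minimal_cutset :: "'a set \<Rightarrow> ('a \<Rightarrow> 'a \<Rightarrow> bool) \<Rightarrow> 'a set \<Rightarrow> bool" where
  "minimal_cutset V E S \<longleftrightarrow> cutset V E S \<and> (\<forall>T. T \<subset> S \<longrightarrow> \<not> cutset V E T)"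

definition cutset_hyperedges :: "'a set \<Rightarrow> ('a \<Rightarrow> 'a \<Rightarrow> bool) \<Rightarrow> 'a set set" where
  "cutset_hyperedges V E = {S. minimal_cutset V E S}"

definition nbhd_hyperedges :: "'a set \<Rightarrow> ('a \<Rightarrow> 'a \<Rightarrow> bool) \<Rightarrow> 'a set set" where
  "nbhd_hyperedges V E = {S. S \<in> nbhd V E ` V \<and> (\<forall>T \<in> nbhd V E ` V. \<not> T \<subset> S)}"

end

theory Submission
  imports Defs
begin

lemma reach_refl: "x \<in> W \<Longrightarrow> reach_in E W x x"
  unfolding reach_in_def by (rule exI[of _ "[x]"]) auto

lemma reach_prepend:
  assumes "reach_in E W y z" "E x y" "x \<in> W"
  shows "reach_in E W x z"
proof -
  obtain p where p: "p \<noteq> []" "hd p = y" "last p = z" "set p \<subseteq> W"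
    "\<forall>i < length p - 1. E (p ! i) (p ! Suc i)"
    using assms(1) unfolding reach_in_def by blast
  have "\<forall>i < length (x#p) - 1. E ((x#p) ! i) ((x#p) ! Suc i)"
  proof (intro allI impI)
    fix i assume i: "i < length (x#p) - 1"
    show "E ((x#p) ! i) ((x#p) ! Suc i)"
    proof (cases i)
      case 0 then show ?thesis using p assms(2) by (cases p) auto
    next
      case (Suc j) then show ?thesis using p i by auto
    qed
  qed
  moreover have "x#p \<noteq> []" "hd (x#p) = x" "last (x#p) = z" "set (x#p) \<subseteq> W"
    using p assms(3) by auto
  ultimately show ?thesis unfolding reach_in_def by blast
qed

lemma key:
  assumes sg: "simple_graph V E" and sp: "split_graph V E"
    and dc: "disconnected_graph (V - T) E"
  shows "\<exists>x\<in>V-T. nbhd V E x \<subseteq> T"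
proof (rule ccontr)
  assume na: "\<not> (\<exists>x\<in>V-T. nbhd V E x \<subseteq> T)"
  have nb: "\<exists>y. y \<in> V - T \<and> E x y" if "x \<in> V - T" for x
  proof -
    have "\<not> nbhd V E x \<subseteq> T" using that na by blast
    then obtain y where "y \<in> nbhd V E x" "y \<notin> T" by blast
    then show ?thesis unfolding nbhd_def by blast
  qed
  obtain K I where KIV: "K \<union> I = V" and KI: "K \<inter> I = {}"
    "\<forall>u\<in>K. \<forall>v\<in>K. u \<noteq> v \<longrightarrow> E u v" "\<forall>u\<in>I. \<forall>v\<in>I. \<not> E u v"
    using sp unfolding split_graph_def by blast
  have sym: "\<And>a b. E a b \<Longrightarrow> E b a" using sg unfolding simple_graph_def by blast
  have toK: "\<exists>k\<in>K - T. k = x \<or> E k x" if xV: "x \<in> V - T" for x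
  proof (cases "x \<in> K")
    case True then show ?thesis using that by blast
  next
    case False
    then have "x \<in> I" using that KIV by blast
    obtain y where "y \<in> V - T" "E x y" using nb[OF xV] by blast
    then have "y \<in> I \<or> y \<in> K" using KIV by blast
    then have "y \<in> K" using KI(3) \<open>x \<in> I\<close> \<open>E x y\<close> by blast
    then show ?thesis using \<open>y \<in> V - T\<close> \<open>E x y\<close> sym by blast
  qed
  have "reach_in E (V - T) u w" if u: "u \<in> V - T" and w: "w \<in> V - T" for u w
  proof -
    obtain k2 where k2: "k2 \<in> K - T" "k2 = w \<or> E k2 w" using toK w by blast
    have k2V: "k2 \<in> V - T" using k2 KIV by blast
    have r2: "reach_in E (V - T) k2 w"
    proof (cases "k2 = w")
      case True then show ?thesis using reach_refl[OF w] by simp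
    next
      case False then have "E k2 w" using k2 by blast
      then show ?thesis using reach_prepend[OF reach_refl[OF w]] k2V by blast
    qed
    obtain k1 where k1: "k1 \<in> K - T" "k1 = u \<or> E k1 u" using toK u by blast
    have k1V: "k1 \<in> V - T" using k1 KIV by blast
    have r1: "reach_in E (V - T) k1 w"
    proof (cases "k1 = k2")
      case True then show ?thesis using r2 by simp
    next
      case False then have "E k1 k2" using KI(2) k1 k2 by blast
      then show ?thesis using reach_prepend[OF r2] k1V by blast
    qed
    show ?thesis
    proof (cases "k1 = u")
      case True then show ?thesis using r1 by simp
    next
      case False then have "E u k1" using k1 sym by blast
      then show ?thesis using reach_prepend[OF r1] u by blast
    qed
  qed
  then show False using dc unfolding disconnected_graph_def by blast
qed

lemma nbhd_cut:
  assumes sg: "simple_graph V E" and y: "y \<in> V" and nu: "\<not> universal_vertex V E y"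
  shows "cutset V E (nbhd V E y)"
proof -
  obtain w where w: "w \<in> V" "w \<noteq> y" "\<not> E y w" using nu y unfolding universal_vertex_def by blast
  have irr: "\<not> E y y" using sg unfolding simple_graph_def by blast
  have yin: "y \<in> V - nbhd V E y" using y irr unfolding nbhd_def by blast
  have win: "w \<in> V - nbhd V E y" using w unfolding nbhd_def by blast
  have "\<not> reach_in E (V - nbhd V E y) y w"
  proof
    assume "reach_in E (V - nbhd V E y) y w"
    then obtain p where p: "p \<noteq> []" "hd p = y" "last p = w" "set p \<subseteq> V - nbhd V E y"
      "\<forall>i < length p - 1. E (p ! i) (p ! Suc i)" unfolding reach_in_def by blast
    have "length p \<noteq> 1"
    proof
      assume "length p = 1"
      then obtain a where "p = [a]" by (cases p) auto
      then show False using p w by simp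
    qed
    then have l: "0 < length p - 1" using p by (cases p) auto
    then have e: "E (p!0) (p!1)" using p by auto
    have "p!0 = y" using p by (simp add: hd_conv_nth)
    moreover have "p!1 \<in> set p" using l by auto
    ultimately show False using e p unfolding nbhd_def by auto
  qed
  moreover have "nbhd V E y \<subseteq> V" unfolding nbhd_def by blast
  ultimately show ?thesis unfolding cutset_def disconnected_graph_def
    using yin win by blast
qed

theorem mainTheorem4:
  fixes V :: "'a set" and E :: "'a \<Rightarrow> 'a \<Rightarrow> bool"
  assumes "simple_graph V E"
    and "connected_graph V E"
    and "split_graph V E"
    and "\<not> (\<exists>v\<in>V. universal_vertex V E v)"
  shows "cutset_hyperedges V E = nbhd_hyperedges V E"
proof
  show "cutset_hyperedges V E \<subseteq> nbhd_hyperedges V E"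
  proof
    fix S assume "S \<in> cutset_hyperedges V E"
    then have mc: "cutset V E S" "\<forall>T. T \<subset> S \<longrightarrow> \<not> cutset V E T"
      unfolding cutset_hyperedges_def minimal_cutset_def by auto
    obtain x where x: "x \<in> V - S" "nbhd V E x \<subseteq> S"
      using key[OF assms(1) assms(3)] mc unfolding cutset_def by blast
    have cx: "cutset V E (nbhd V E x)" using nbhd_cut[OF assms(1)] x assms(4) by blast
    have Sx: "S = nbhd V E x" using mc x cx by blast
    have "\<forall>T \<in> nbhd V E ` V. \<not> T \<subset> S"
      using mc nbhd_cut[OF assms(1)] assms(4) by blast
    then show "S \<in> nbhd_hyperedges V E" unfolding nbhd_hyperedges_def using Sx x by blast
  qed
next
  show "nbhd_hyperedges V E \<subseteq> cutset_hyperedges V E"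
  proof
    fix S assume "S \<in> nbhd_hyperedges V E"
    then obtain v where v: "v \<in> V" "S = nbhd V E v" and mn: "\<forall>T \<in> nbhd V E ` V. \<not> T \<subset> S"
      unfolding nbhd_hyperedges_def by blast
    have c: "cutset V E S" using nbhd_cut[OF assms(1)] v assms(4) by blast
    have "\<not> cutset V E T" if "T \<subset> S" for T
    proof
      assume "cutset V E T"
      then obtain x where x: "x \<in> V - T" "nbhd V E x \<subseteq> T"
        using key[OF assms(1) assms(3)] unfolding cutset_def by blast
      then have "nbhd V E x \<subset> S" using that by blast
      then show False using mn x by blast
    qed
    then show "S \<in> cutset_hyperedges V E"
      unfolding cutset_hyperedges_def minimal_cutset_def using c by blast
  qed
qed

end
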